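(* Let $F:\mathbb{R}^n\rightrightarrows\mathbb{R}^p$ be a nearly convex set-valued mapping and $\Theta\subset\mathbb{R}^p$ a nearly convex set such that $\operatorname{ri}(\operatorname{rge} F)\cap\operatorname{ri}\Theta\neq\emptyset$. Define $F_0(x)=\operatorname{ri} F(x)$ for $x\in\mathbb{R}^n$. Then $$\operatorname{ri}\big(F^{-1}(\Theta)\big)=\operatorname{ri}(\operatorname{dom} F)\cap F_0^{-1}(\operatorname{ri}\Theta),$$ i.e. $\operatorname{ri}(F^{-1}(\Theta))=\{x\in\operatorname{ri}(\operatorname{dom} F):\operatorname{ri}F(x)\cap\operatorname{ri}\Theta\neq\emptyset\}$.
   Context: A set $\Omega\subset\mathbb{R}^k$ is nearly convex if there is a convex set $C$ with $C\subset\Omega\subset\overline{C}$. For an arbitrary set $\Omega$, $\operatorname{ri}\Omega=\{a\in\Omega:\exists\delta>0,\ B(a;\delta)\cap\operatorname{aff}\Omega\subset\Omega\}$. For $F:\mathbb{R}^n\rightrightarrows\mathbb{R}^p$: $\operatorname{dom} F=\{x:F(x)\neq\emptyset\}$, $\operatorname{rge} F=\bigcup_x F(x)$, $\operatorname{gph} F=\{(x,y):y\in F(x)\}$; $F$ is nearly convex if $\operatorname{gph} F$ is nearly convex. For $\Theta\subset\mathbb{R}^p$, $F^{-1}(\Theta)=\{x\in\mathbb{R}^n:F(x)\cap\Theta\neq\emptyset\}$. *)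

theory Defs
  imports "HOL-Analysis.Analysis"
begin

definition nearly_convex :: "'a::real_normed_vector set \<Rightarrow> bool" where
  "nearly_convex \<Omega> \<longleftrightarrow> (\<exists>C. convex C \<and> C \<subseteq> \<Omega> \<and> \<Omega> \<subseteq> closure C)"

definition sv_dom :: "('a \<Rightarrow> 'b set) \<Rightarrow> 'a set" where
  "sv_dom F = {x. F x \<noteq> {}}"

definition sv_rge :: "('a \<Rightarrow> 'b set) \<Rightarrow> 'b set" where
  "sv_rge F = (\<Union>x. F x)"

definition sv_gph :: "('a \<Rightarrow> 'b set) \<Rightarrow> ('a \<times> 'b) set" where
  "sv_gph F = {(x, y). y \<in> F x}"

definition nearly_convex_map :: "('a::real_normed_vector \<Rightarrow> 'b::real_normed_vector set) \<Rightarrow> bool" where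
  "nearly_convex_map F \<longleftrightarrow> nearly_convex (sv_gph F)"

definition sv_preimage :: "('a \<Rightarrow> 'b set) \<Rightarrow> 'b set \<Rightarrow> 'a set" where
  "sv_preimage F \<Theta> = {x. F x \<inter> \<Theta> \<noteq> {}}"

end

theory Submission
  imports Defs
begin

lemma nc_ri:
  fixes C \<Omega> :: "'n::euclidean_space set"
  assumes "convex C" "C \<subseteq> \<Omega>" "\<Omega> \<subseteq> closure C"
  shows "rel_interior \<Omega> = rel_interior C"
proof -
  have "affine hull C \<subseteq> affine hull \<Omega>" using assms(2) by (rule hull_mono)
  moreover have "affine hull \<Omega> \<subseteq> affine hull (closure C)" using assms(3) by (rule hull_mono)
  ultimately have a: "affine hull \<Omega> = affine hull C" by simp
  have "rel_interior C \<subseteq> rel_interior \<Omega>"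
    using subset_rel_interior[OF assms(2)] a by simp
  moreover have "rel_interior \<Omega> \<subseteq> rel_interior (closure C)"
    using subset_rel_interior[OF assms(3)] a by simp
  ultimately show ?thesis using convex_rel_interior_closure[OF assms(1)] by blast
qed

lemma nc_lin:
  fixes C \<Omega> :: "'n::euclidean_space set" and f :: "'n \<Rightarrow> 'm::euclidean_space"
  assumes "linear f" "convex C" "C \<subseteq> \<Omega>" "\<Omega> \<subseteq> closure C"
  shows "rel_interior (f ` \<Omega>) = f ` rel_interior \<Omega>"
proof -
  have c: "convex (f ` C)" using convex_linear_image assms by blast
  have "f ` \<Omega> \<subseteq> f ` closure C" using assms(4) by blast
  also have "\<dots> \<subseteq> closure (f ` C)" using closure_linear_image_subset[OF assms(1)] .
  finally have "rel_interior (f ` \<Omega>) = rel_interior (f ` C)"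
    using nc_ri[OF c] assms(3) by blast
  also have "\<dots> = f ` rel_interior C" using rel_interior_convex_linear_image assms by metis
  also have "\<dots> = f ` rel_interior \<Omega>" using nc_ri assms by metis
  finally show ?thesis .
qed

lemma nc_inter:
  fixes C1 C2 G H :: "'n::euclidean_space set"
  assumes "convex C1" "C1 \<subseteq> G" "G \<subseteq> closure C1"
    "convex C2" "C2 \<subseteq> H" "H \<subseteq> closure C2"
    "rel_interior G \<inter> rel_interior H \<noteq> {}"
  shows "rel_interior (G \<inter> H) = rel_interior G \<inter> rel_interior H"
    "convex (rel_interior C1 \<inter> rel_interior C2)"
    "rel_interior C1 \<inter> rel_interior C2 \<subseteq> G \<inter> H"
    "G \<inter> H \<subseteq> closure (rel_interior C1 \<inter> rel_interior C2)"
proof -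
  have rG: "rel_interior G = rel_interior C1" using nc_ri assms by metis
  have rH: "rel_interior H = rel_interior C2" using nc_ri assms by metis
  define E where "E = rel_interior C1 \<inter> rel_interior C2"
  have ne: "E \<noteq> {}" using assms(7) rG rH E_def by simp
  show cE: "convex (rel_interior C1 \<inter> rel_interior C2)"
    using convex_rel_interior assms(1,4) convex_Int by blast
  show s1: "rel_interior C1 \<inter> rel_interior C2 \<subseteq> G \<inter> H"
    using rel_interior_subset assms(2,5) by blast
  have "closure C1 \<inter> closure C2 \<subseteq> closure E"
    using convex_closure_rel_interior_Int[of "{C1, C2}"] assms(1,4) ne E_def by auto
  then show s2: "G \<inter> H \<subseteq> closure (rel_interior C1 \<inter> rel_interior C2)"
    using assms(3,6) E_def by blast
  have "rel_interior (G \<inter> H) = rel_interior E" using nc_ri[OF cE s1 s2] E_def by simp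
  also have "\<dots> = rel_interior (rel_interior C1) \<inter> rel_interior (rel_interior C2)"
    unfolding E_def
    apply (rule convex_rel_interior_inter_two)
    using convex_rel_interior assms(1,4) ne E_def by (simp_all add: rel_interior_rel_interior)
  also have "\<dots> = rel_interior G \<inter> rel_interior H"
    by (simp add: rel_interior_rel_interior[OF assms(1)] rel_interior_rel_interior[OF assms(4)] rG rH)
  finally show "rel_interior (G \<inter> H) = rel_interior G \<inter> rel_interior H" .
qed

lemma convex_fiber:
  fixes C :: "('m::euclidean_space \<times> 'n::euclidean_space) set"
  assumes "convex C" shows "convex {z. (x, z) \<in> C}"
  unfolding convex_def
proof (intro ballI allI impI, clarsimp)
  fix a b :: 'n and u v :: real
  assume "(x, a) \<in> C" "(x, b) \<in> C" "0 \<le> u" "0 \<le> v" "u + v = 1"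
  then have "u *\<^sub>R (x, a) + v *\<^sub>R (x, b) \<in> C" using assms unfolding convex_def by blast
  moreover have "u *\<^sub>R (x, a) + v *\<^sub>R (x, b) = (x, u *\<^sub>R a + v *\<^sub>R b)"
    using \<open>u + v = 1\<close> by (simp add: scaleR_left_distrib[symmetric])
  ultimately show "(x, u *\<^sub>R a + v *\<^sub>R b) \<in> C" by simp
qed

theorem theorem3p3:
  fixes F :: "'a::euclidean_space \<Rightarrow> 'b::euclidean_space set" and \<Theta> :: "'b set"
  assumes "nearly_convex_map F"
    and "nearly_convex \<Theta>"
    and "rel_interior (sv_rge F) \<inter> rel_interior \<Theta> \<noteq> {}"
  shows "rel_interior (sv_preimage F \<Theta>)
           = rel_interior (sv_dom F) \<inter> sv_preimage (\<lambda>x. rel_interior (F x)) (rel_interior \<Theta>)"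
proof -
  let ?G = "sv_gph F"
  obtain C where C: "convex C" "C \<subseteq> ?G" "?G \<subseteq> closure C"
    using assms(1) unfolding nearly_convex_map_def nearly_convex_def by blast
  obtain D where D: "convex D" "D \<subseteq> \<Theta>" "\<Theta> \<subseteq> closure D"
    using assms(2) unfolding nearly_convex_def by blast
  let ?H = "(UNIV::'a set) \<times> \<Theta>"
  have H: "convex (UNIV \<times> D)" "UNIV \<times> D \<subseteq> ?H" "?H \<subseteq> closure (UNIV \<times> D)"
    using D convex_Times[of UNIV D] by (auto simp: closure_Times)
  have rH: "rel_interior ?H = UNIV \<times> rel_interior \<Theta>"
    using nc_ri[OF H] rel_interior_Times[of UNIV D] D nc_ri[OF D] by simp
  have lf: "linear (fst :: 'a \<times> 'b \<Rightarrow> 'a)" by (rule bounded_linear.linear[OF bounded_linear_fst])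
  have ls: "linear (snd :: 'a \<times> 'b \<Rightarrow> 'b)" by (rule bounded_linear.linear[OF bounded_linear_snd])
  have rge: "sv_rge F = snd ` ?G" unfolding sv_rge_def sv_gph_def by force
  have dom: "sv_dom F = fst ` ?G" unfolding sv_dom_def sv_gph_def by force
  have rG: "rel_interior ?G = rel_interior C" using nc_ri C by metis
  obtain y where y: "y \<in> rel_interior (sv_rge F)" "y \<in> rel_interior \<Theta>" using assms(3) by blast
  have "rel_interior (sv_rge F) = snd ` rel_interior ?G" unfolding rge using nc_lin[OF ls C] .
  then obtain x where x: "(x, y) \<in> rel_interior ?G" using y by force
  have ne: "rel_interior ?G \<inter> rel_interior ?H \<noteq> {}" using x y rH by blast
  note I = nc_inter[OF C H ne]
  have pre: "sv_preimage F \<Theta> = fst ` (?G \<inter> ?H)"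
    unfolding sv_preimage_def sv_gph_def by force
  have rpre: "rel_interior (sv_preimage F \<Theta>) = fst ` (rel_interior ?G \<inter> (UNIV \<times> rel_interior \<Theta>))"
    unfolding pre using nc_lin[OF lf I(2,3,4)] I(1) rH by simp
  define Cf where "Cf = (\<lambda>x. {z. (x, z) \<in> C})"
  define C' where "C' = closure C"
  have cC': "convex C'" using C(1) convex_closure C'_def by blast
  have rC': "rel_interior C' = rel_interior C" using convex_rel_interior_closure C(1) C'_def by blast
  have domC: "{x. Cf x \<noteq> {}} = fst ` C" unfolding Cf_def by (auto simp: fst_eq_Domain Domain_iff)
  have domC': "{x. {z. (x, z) \<in> C'} \<noteq> {}} = fst ` C'" by (auto simp: fst_eq_Domain Domain_iff)
  have rdomC: "rel_interior (fst ` C) = fst ` rel_interior C"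
    using rel_interior_convex_linear_image[OF lf C(1)] by simp
  have rdomC': "rel_interior (fst ` C') = fst ` rel_interior C"
    using rel_interior_convex_linear_image[OF lf cC'] rC' by simp
  have rdom: "rel_interior (sv_dom F) = rel_interior (fst ` C)"
    unfolding dom using nc_lin[OF lf C] rG rdomC by simp
  have projC: "\<And>a b. (a, b) \<in> rel_interior C \<longleftrightarrow> a \<in> rel_interior (fst ` C) \<and> b \<in> rel_interior (Cf a)"
    using rel_interior_projection[OF C(1) Cf_def] domC by simp
  have projC': "\<And>a b. (a, b) \<in> rel_interior C' \<longleftrightarrow> a \<in> rel_interior (fst ` C') \<and> b \<in> rel_interior {z. (a, z) \<in> C'}"
    using rel_interior_projection[OF cC', of "\<lambda>a. {z. (a, z) \<in> C'}"] domC' by simp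
  have fib: "rel_interior (F a) = rel_interior (Cf a)" if a: "a \<in> rel_interior (fst ` C)" for a
  proof -
    have cf: "convex (Cf a)" unfolding Cf_def using convex_fiber[OF C(1)] .
    have cf': "convex {z. (a, z) \<in> C'}" using convex_fiber[OF cC'] .
    have eq: "rel_interior {z. (a, z) \<in> C'} = rel_interior (Cf a)"
    proof (rule set_eqI)
      fix z
      have a': "a \<in> rel_interior (fst ` C')" using a rdomC rdomC' by simp
      have "z \<in> rel_interior {z. (a, z) \<in> C'} \<longleftrightarrow> (a, z) \<in> rel_interior C'"
        using projC'[of a z] a' by simp
      also have "\<dots> \<longleftrightarrow> (a, z) \<in> rel_interior C" using rC' by simp
      also have "\<dots> \<longleftrightarrow> z \<in> rel_interior (Cf a)" using projC[of a z] a by simp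
      finally show "z \<in> rel_interior {z. (a, z) \<in> C'} \<longleftrightarrow> z \<in> rel_interior (Cf a)" .
    qed
    have s1: "Cf a \<subseteq> F a" using C(2) unfolding Cf_def sv_gph_def by auto
    have "F a \<subseteq> {z. (a, z) \<in> C'}" using C(3) unfolding C'_def sv_gph_def by auto
    also have "\<dots> \<subseteq> closure {z. (a, z) \<in> C'}" by (rule closure_subset)
    also have "\<dots> = closure (Cf a)"
      using convex_closure_rel_interior[OF cf'] convex_closure_rel_interior[OF cf] eq by simp
    finally show ?thesis using nc_ri[OF cf s1] by blast
  qed
  show ?thesis
  proof (rule set_eqI)
    fix a
    have "a \<in> rel_interior (sv_preimage F \<Theta>) \<longleftrightarrow> (\<exists>b. (a, b) \<in> rel_interior C \<and> b \<in> rel_interior \<Theta>)"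
      unfolding rpre rG by force
    also have "\<dots> \<longleftrightarrow> a \<in> rel_interior (fst ` C) \<and> (\<exists>b. b \<in> rel_interior (Cf a) \<and> b \<in> rel_interior \<Theta>)"
      using projC by blast
    also have "\<dots> \<longleftrightarrow> a \<in> rel_interior (sv_dom F) \<inter> sv_preimage (\<lambda>x. rel_interior (F x)) (rel_interior \<Theta>)"
      unfolding rdom sv_preimage_def using fib by auto
    finally show "a \<in> rel_interior (sv_preimage F \<Theta>) \<longleftrightarrow> a \<in> rel_interior (sv_dom F) \<inter> sv_preimage (\<lambda>x. rel_interior (F x)) (rel_interior \<Theta>)" .
  qed
qed

end
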